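(* Let $\ell$ be a generic line in $\mathbb P(\mathbb C^{3\times3})$, containing the three rank-two matrices $F_1,F_2,F_3$, and for $j=1,2,3$ let $e_j^x$ and $e_j^y$ generate the right and left nullspaces of $F_j$. For each $j$ let $(\pi_1^{j},\pi_2^{j})$ be a pair of linear projections $\mathbb P^3\dashrightarrow\mathbb P^2$ with non-coincident centers $c_1^j,c_2^j$ and fundamental matrix $F_j$, and let $Q_j\subset\mathbb P^3$ be the quadric corresponding to $\ell$, namely $Q_j=\{p:\pi_2^j(p)^\top M\pi_1^j(p)=0\}$ for any $M\in\ell$, $M\neq F_j$. Then: (1) each $Q_j$ is a permissible quadric containing $c_1^j,c_2^j$; (2) the three Cremona transformations $\pi_2^j\circ(\pi_1^j|_{Q_j})^{-1}$, $j=1,2,3$, are all equal to one and the same Cremona transformation $f$, whose base points are $e_1^x,e_2^x,e_3^x$ in the domain and $e_1^y,e_2^y,e_3^y$ in the codomain.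
   Context: Work over $\mathbb C$. A line in $\mathbb P(\mathbb C^{3\times3})$ is generic if it contains exactly three rank-two matrices. A linear projection $\pi:\mathbb P^3\dashrightarrow\mathbb P^2$ is $p\mapsto Ap$, $A\in\mathbb C^{3\times4}$ of rank three, with center spanning $\ker A$; the fundamental matrix of a pair of projections with distinct centers is the rank-two $F$ with $\pi_2(p)^\top F\pi_1(p)=0$ for all $p$. A permissible quadric is a smooth quadric through both centers not containing the line joining them. A quadratic Cremona transformation is a birational map $\mathbb P^2\dashrightarrow\mathbb P^2$ given by quadrics, with three base points and three exceptional lines (assumed distinct); the base points of its inverse are its base points in the codomain. *)

theory Defs
  imports "HOL-Analysis.Analysis"
begin

(* Points of projective space P^{n-1} are represented by nonzero vectors in complex^'n;
   two nonzero vectors represent the same point iff they are proportional. *)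

definition proportional :: "complex^'n \<Rightarrow> complex^'n \<Rightarrow> bool" where
  "proportional x y \<longleftrightarrow> (\<exists>c. c \<noteq> 0 \<and> x = c *s y)"

definition msc :: "complex \<Rightarrow> complex^'n^'m \<Rightarrow> complex^'n^'m" where
  "msc c M = (\<chi> i j. c * M$i$j)"

definition mproportional :: "complex^'n^'m \<Rightarrow> complex^'n^'m \<Rightarrow> bool" where
  "mproportional M N \<longleftrightarrow> (\<exists>c. c \<noteq> 0 \<and> M = msc c N)"

definition on_line :: "complex^3^3 \<Rightarrow> complex^3^3 \<Rightarrow> complex^3^3 \<Rightarrow> bool" where
  "on_line L0 L1 M \<longleftrightarrow> M \<noteq> 0 \<and> (\<exists>a b. M = msc a L0 + msc b L1)"

definition mat_lin_indep :: "complex^3^3 \<Rightarrow> complex^3^3 \<Rightarrow> bool" where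
  "mat_lin_indep L0 L1 \<longleftrightarrow> (\<forall>a b. msc a L0 + msc b L1 = 0 \<longrightarrow> a = 0 \<and> b = 0)"

definition generic_line_with ::
  "complex^3^3 \<Rightarrow> complex^3^3 \<Rightarrow> (nat \<Rightarrow> complex^3^3) \<Rightarrow> bool" where
  "generic_line_with L0 L1 F \<longleftrightarrow>
     mat_lin_indep L0 L1 \<and>
     (\<forall>j\<in>{1,2,3}. on_line L0 L1 (F j) \<and> rank (F j) = 2) \<and>
     (\<forall>j\<in>{1,2,3}. \<forall>k\<in>{1,2,3}. j \<noteq> k \<longrightarrow> \<not> mproportional (F j) (F k)) \<and>
     (\<forall>M. on_line L0 L1 M \<and> rank M = 2 \<longrightarrow> (\<exists>j\<in>{1,2,3}. mproportional M (F j)))"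

definition bil :: "complex^'m \<Rightarrow> complex^'n^'m \<Rightarrow> complex^'n \<Rightarrow> complex" where
  "bil x M y = (\<Sum>i\<in>UNIV. \<Sum>k\<in>UNIV. x$i * M$i$k * y$k)"

(* linear projection P^3 --> P^2, p \<mapsto> A p, A of rank three; its center spans ker A *)
definition is_projection :: "complex^4^3 \<Rightarrow> bool" where
  "is_projection A \<longleftrightarrow> rank A = 3"

definition is_center :: "complex^4^3 \<Rightarrow> complex^4 \<Rightarrow> bool" where
  "is_center A c \<longleftrightarrow> c \<noteq> 0 \<and> A *v c = 0"

definition is_fundamental_matrix :: "complex^4^3 \<Rightarrow> complex^4^3 \<Rightarrow> complex^3^3 \<Rightarrow> bool" where
  "is_fundamental_matrix A1 A2 F \<longleftrightarrow>
     rank F = 2 \<and> (\<forall>p. bil (A2 *v p) F (A1 *v p) = 0)"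

definition qf :: "complex^4^4 \<Rightarrow> complex^4 \<Rightarrow> complex" where
  "qf N p = bil p N p"

(* the quadric Q = {p : pi_2(p)^T M pi_1(p) = 0} has the form p^T (A2^T M A1) p *)
definition quad_of :: "complex^4^3 \<Rightarrow> complex^4^3 \<Rightarrow> complex^3^3 \<Rightarrow> complex^4^4" where
  "quad_of A1 A2 M = transpose A2 ** M ** A1"

(* smooth quadric: the form is not identically zero and no point of the quadric is singular,
   i.e. the gradient (N + N^T) p of p \<mapsto> p^T N p does not vanish at any point of it *)
definition smooth_quadric :: "complex^4^4 \<Rightarrow> bool" where
  "smooth_quadric N \<longleftrightarrow> (\<exists>p. qf N p \<noteq> 0) \<and>
     (\<forall>p. p \<noteq> 0 \<and> qf N p = 0 \<longrightarrow> (N + transpose N) *v p \<noteq> 0)"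

definition permissible_quadric :: "complex^4^4 \<Rightarrow> complex^4 \<Rightarrow> complex^4 \<Rightarrow> bool" where
  "permissible_quadric N c1 c2 \<longleftrightarrow>
     smooth_quadric N \<and> qf N c1 = 0 \<and> qf N c2 = 0 \<and>
     \<not> (\<forall>a b. qf N (a *s c1 + b *s c2) = 0)"

definition quadratic_map :: "(complex^3 \<Rightarrow> complex^3) \<Rightarrow> bool" where
  "quadratic_map f \<longleftrightarrow> (\<exists>S :: complex^3^3^3.
      \<forall>x. f x = (\<chi> i. \<Sum>a\<in>UNIV. \<Sum>b\<in>UNIV. S$i$a$b * x$a * x$b))"

definition base_points :: "(complex^3 \<Rightarrow> complex^3) \<Rightarrow> (complex^3) set" where
  "base_points f = {x. x \<noteq> 0 \<and> f x = 0}"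

definition three_distinct_points :: "(complex^3) set \<Rightarrow> bool" where
  "three_distinct_points B \<longleftrightarrow> (\<exists>p1 p2 p3.
      p1 \<noteq> 0 \<and> p2 \<noteq> 0 \<and> p3 \<noteq> 0 \<and>
      \<not> proportional p1 p2 \<and> \<not> proportional p1 p3 \<and> \<not> proportional p2 p3 \<and>
      B = {x. proportional x p1 \<or> proportional x p2 \<or> proportional x p3})"

(* f is a quadratic Cremona transformation with (quadratic) inverse g:
   g o f and f o g are the identity as rational maps, and both have three distinct base points *)
definition quadratic_cremona :: "(complex^3 \<Rightarrow> complex^3) \<Rightarrow> (complex^3 \<Rightarrow> complex^3) \<Rightarrow> bool" where
  "quadratic_cremona f g \<longleftrightarrow>
     quadratic_map f \<and> quadratic_map g \<and>
     (\<forall>x. \<exists>c. g (f x) = c *s x) \<and> (\<exists>x. g (f x) \<noteq> 0) \<and>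
     (\<forall>y. \<exists>c. f (g y) = c *s y) \<and> (\<exists>y. f (g y) \<noteq> 0) \<and>
     three_distinct_points (base_points f) \<and> three_distinct_points (base_points g)"

(* the rational map f equals pi_2 o (pi_1|_Q)^{-1}, i.e. f(pi_1 p) = pi_2 p for every point p
   of the quadric Q at which both sides are defined *)
definition equals_proj_composite ::
  "(complex^3 \<Rightarrow> complex^3) \<Rightarrow> complex^4^3 \<Rightarrow> complex^4^3 \<Rightarrow> complex^4^4 \<Rightarrow> bool" where
  "equals_proj_composite f A1 A2 N \<longleftrightarrow>
     (\<forall>p. p \<noteq> 0 \<and> qf N p = 0 \<and> A1 *v p \<noteq> 0 \<and> A2 *v p \<noteq> 0 \<and> f (A1 *v p) \<noteq> 0
          \<longrightarrow> proportional (f (A1 *v p)) (A2 *v p))"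

end

theory Submission
  imports Defs "HOL-Computational_Algebra.Polynomial"
begin

definition dt :: "complex^'n \<Rightarrow> complex^'n \<Rightarrow> complex" where
  "dt a b = (\<Sum>i\<in>UNIV. a$i * b$i)"

definition cr :: "complex^3 \<Rightarrow> complex^3 \<Rightarrow> complex^3" where
  "cr a b = vector [a$2*b$3 - a$3*b$2, a$3*b$1 - a$1*b$3, a$1*b$2 - a$2*b$1]"

lemma cr_nth [simp]:
  "cr a b $ 1 = a$2*b$3 - a$3*b$2"
  "cr a b $ 2 = a$3*b$1 - a$1*b$3"
  "cr a b $ 3 = a$1*b$2 - a$2*b$1"
  by (simp_all add: cr_def)

lemma dt3: "dt (a::complex^3) b = a$1*b$1 + a$2*b$2 + a$3*b$3"
  by (simp add: dt_def sum_3)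

lemma vec3_eq: "((x::complex^3) = y) \<longleftrightarrow> x$1 = y$1 \<and> x$2 = y$2 \<and> x$3 = y$3"
  by (simp add: vec_eq_iff forall_3)

lemma vec3_zero: "((x::complex^3) = 0) \<longleftrightarrow> x$1 = 0 \<and> x$2 = 0 \<and> x$3 = 0"
  by (simp add: vec_eq_iff forall_3)

lemma cr_orth1: "dt (cr a b) a = 0" by (simp add: dt3 algebra_simps)
lemma cr_orth2: "dt (cr a b) b = 0" by (simp add: dt3 algebra_simps)

lemma cr_cr: "cr (cr a b) c = (dt a c) *s b - (dt b c) *s a"
  by (simp add: vec3_eq dt3 algebra_simps)

lemma cr_anti: "cr b a = - cr a b"
  by (simp add: vec3_eq)

lemma cr_zero_prop:
  assumes "a \<noteq> 0" "cr a r = 0"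
  shows "\<exists>\<mu>. r = \<mu> *s a"
proof -
  from assms(1) have "a$1 \<noteq> 0 \<or> a$2 \<noteq> 0 \<or> a$3 \<noteq> 0" by (simp add: vec3_zero)
  moreover have e: "a$2*r$3 = a$3*r$2" "a$3*r$1 = a$1*r$3" "a$1*r$2 = a$2*r$1"
    using assms(2) by (simp_all add: vec3_zero)
  ultimately show ?thesis
  proof (elim disjE)
    assume h: "a$1 \<noteq> 0"
    show ?thesis
      apply (rule exI[of _ "r$1 / a$1"])
      using h e by (simp add: vec3_eq field_simps)
  next
    assume h: "a$2 \<noteq> 0"
    show ?thesis
      apply (rule exI[of _ "r$2 / a$2"])
      using h e by (simp add: vec3_eq field_simps)
  next
    assume h: "a$3 \<noteq> 0"
    show ?thesis
      apply (rule exI[of _ "r$3 / a$3"])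
      using h e by (simp add: vec3_eq field_simps)
  qed
qed

lemma perp2:
  assumes "dt a y = 0" "dt b y = 0" "cr a b \<noteq> 0"
  shows "\<exists>\<mu>. y = \<mu> *s cr a b"
proof -
  have "cr (cr a b) y = 0" using assms by (simp add: cr_cr dt3 mult.commute)
  then show ?thesis using cr_zero_prop assms(3) by blast
qed

lemma vm_sum: "(x::complex^'m) v* (A::complex^'n^'m) = (\<Sum>i\<in>UNIV. x$i *s row i A)"
  by (simp add: vec_eq_iff vector_matrix_mult_def row_def sum_component mult.commute)

lemma ker_of_det0:
  fixes A :: "complex^'n^'n"
  assumes "det A = 0"
  shows "\<exists>x. x \<noteq> 0 \<and> A *v x = 0"
proof -
  have "\<not> inj ((*v) A)"
    using det_nz_iff_inj_gen[of "(*v) A"] assms by simp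
  then obtain x y where "x \<noteq> y" "A *v x = A *v y" unfolding inj_def by blast
  then show ?thesis
    by (intro exI[of _ "x - y"]) (simp add: matrix_vector_mult_diff_distrib)
qed

lemma ker_det_nz:
  fixes A :: "complex^'n^'n"
  assumes "det A \<noteq> 0" "A *v x = 0"
  shows "x = 0"
proof -
  have "inj ((*v) A)"
    using det_nz_iff_inj_gen[of "(*v) A"] assms by simp
  then show ?thesis using assms(2) by (metis injD matrix_vector_mult_0_right)
qed

lemma lker_of_det0:
  fixes A :: "complex^'n^'n"
  assumes "det A = 0"
  shows "\<exists>x. x \<noteq> 0 \<and> x v* A = 0"
  using ker_of_det0[of "transpose A"] assms by (simp add: det_transpose)

lemma rank_le2_of_dep:
  fixes A :: "complex^'n^3"
  assumes "w v* A = 0" "w \<noteq> 0"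
  shows "rank A \<le> 2"
proof -
  obtain i where wi: "w$i \<noteq> 0" using assms(2) by (metis vec_eq_iff zero_index)
  let ?R = "(\<lambda>k. row k A) ` (UNIV - {i})"
  have s0: "(\<Sum>k\<in>UNIV. w$k *s row k A) = 0" using assms(1) by (simp add: vm_sum)
  have "(\<Sum>k\<in>UNIV. w$k *s row k A) = w$i *s row i A + (\<Sum>k\<in>UNIV-{i}. w$k *s row k A)"
    by (simp add: sum.remove)
  with s0 have eq: "row i A = (- 1 / w$i) *s (\<Sum>k\<in>UNIV-{i}. w$k *s row k A)"
    using wi by (simp add: vec_eq_iff field_simps add_eq_0_iff2 sum_component) 
  have "row i A \<in> vec.span ?R"
    unfolding eq by (intro vec.span_scale vec.span_sum) (auto intro: vec.span_base)
  then have "rows A \<subseteq> vec.span ?R"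
    by (auto simp: rows_def intro: vec.span_base)
  then have "vec.dim (rows A) \<le> card ?R" by (intro vec.dim_le_card) auto
  also have "\<dots> \<le> card (UNIV - {i})" by (rule card_image_le) simp
  also have "\<dots> = 2" by simp
  finally show ?thesis by (simp add: row_rank_def_gen)
qed

lemma rank3_S:
  fixes A :: "complex^'n^3"
  assumes "rank A = 3" "w v* A = 0"
  shows "w = 0"
  using rank_le2_of_dep[of w A] assms by force

lemma rows3: "rows (X::'a::zero^'n^3) = {row 1 X, row 2 X, row 3 X}"
  by (auto simp: rows_def UNIV_3)

lemma indep2:
  fixes u v :: "complex^3"
  assumes "cr u v \<noteq> 0"
  shows "vec.independent {u, v}" "u \<noteq> v"
proof -
  have v0: "v \<noteq> 0" using assms by (auto simp: vec3_zero)
  have nu: "u \<notin> vec.span {v}"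
  proof
    assume "u \<in> vec.span {v}"
    then obtain k where "u = k *s v" by (auto simp: vec.span_singleton)
    then show False using assms by (simp add: vec3_zero algebra_simps)
  qed
  have "vec.independent {v}" using v0 by (simp add: vec.independent_insert)
  then show "vec.independent {u, v}" using nu by (simp add: vec.independent_insert)
  show "u \<noteq> v" using assms by (auto simp: vec3_zero)
qed

lemma rank_ge2:
  fixes X :: "complex^3^3"
  assumes "cr (row a X) (row b X) \<noteq> 0"
  shows "rank X \<ge> 2"
proof -
  have c: "card {row a X, row b X} = 2" using indep2(2)[OF assms] by simp
  have "card {row a X, row b X} \<le> vec.dim (rows X)"
    by (rule vec.independent_card_le_dim) (auto simp: rows_def indep2(1)[OF assms])
  then show ?thesis using c by (simp add: row_rank_def_gen)
qed

lemma rank_eq2I: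
  fixes X :: "complex^3^3"
  assumes "det X = 0" "cr (row a X) (row b X) \<noteq> 0"
  shows "rank X = 2"
  using lker_of_det0[OF assms(1)] rank_le2_of_dep[of _ X] rank_ge2[OF assms(2)] by force

lemma det_nz_rank3:
  fixes X :: "complex^3^3"
  assumes "det X \<noteq> 0"
  shows "rank X = 3"
proof -
  have ind: "vec.independent (rows X)" using det_dependent_rows assms by blast
  have d: "row 1 X \<noteq> row 2 X" "row 1 X \<noteq> row 3 X" "row 2 X \<noteq> row 3 X"
    using det_identical_rows[of 1 2 X] det_identical_rows[of 1 3 X] det_identical_rows[of 2 3 X]
      assms by auto
  have "vec.dim (rows X) = card (rows X)" using vec.dim_eq_card_independent[OF ind] .
  also have "\<dots> = 3" using d by (simp add: rows3)
  finally show ?thesis by (simp add: row_rank_def_gen)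
qed

lemma rank2_det0:
  fixes X :: "complex^3^3"
  assumes "rank X = 2"
  shows "det X = 0"
  using det_nz_rank3 assms by force

lemma rank_le1:
  fixes X :: "complex^3^3"
  assumes "\<forall>a b. cr (row a X) (row b X) = 0"
  shows "rank X \<le> 1"
proof (cases "\<exists>a. row a X \<noteq> 0")
  case True
  then obtain a where a: "row a X \<noteq> 0" by blast
  have "rows X \<subseteq> vec.span {row a X}"
  proof
    fix r assume "r \<in> rows X"
    then obtain b where b: "r = row b X" by (auto simp: rows_def)
    obtain \<mu> where "row b X = \<mu> *s row a X" using cr_zero_prop[OF a] assms by blast
    then show "r \<in> vec.span {row a X}" using b by (auto simp: vec.span_singleton)
  qed
  then have "vec.dim (rows X) \<le> card {row a X}" by (intro vec.dim_le_card) auto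
  then show ?thesis by (simp add: row_rank_def_gen)
next
  case False
  then have "rows X \<subseteq> {0}" by (auto simp: rows_def)
  then have "vec.dim (rows X) \<le> card {0::complex^3}" by (intro vec.dim_le_card) auto
  then show ?thesis by (simp add: row_rank_def_gen)
qed

lemma rank2_iff:
  fixes X :: "complex^3^3"
  shows "rank X = 2 \<longleftrightarrow> det X = 0 \<and> (\<exists>a b. cr (row a X) (row b X) \<noteq> 0)"
  using rank_eq2I rank2_det0 rank_le1 by fastforce

lemma minors_rows_cols:
  fixes X :: "complex^3^3"
  shows "(\<forall>a b. cr (row a X) (row b X) = 0) \<longleftrightarrow> (\<forall>a b. cr (column a X) (column b X) = 0)"
  by (simp add: forall_3 vec3_zero row_def column_def algebra_simps) (auto simp: algebra_simps)

lemma rank2_transpose: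
  fixes X :: "complex^3^3"
  shows "rank (transpose X) = 2 \<longleftrightarrow> rank X = 2"
  unfolding rank2_iff det_transpose row_transpose using minors_rows_cols by blast

lemma rank2_kernel:
  fixes X :: "complex^3^3"
  assumes "rank X = 2" "X *v u = 0" "u \<noteq> 0" "X *v v = 0"
  shows "\<exists>\<mu>. v = \<mu> *s u"
proof (cases "cr u v = 0")
  case True
  then show ?thesis using cr_zero_prop[OF assms(3)] by blast
next
  case False
  have rowdt: "dt (row i X) w = (X *v w)$i" for i w
    by (simp add: dt_def row_def matrix_vector_mult_def)
  have "rows X \<subseteq> vec.span {cr u v}"
  proof
    fix r assume "r \<in> rows X"
    then obtain i where i: "r = row i X" by (auto simp: rows_def)
    have "dt u r = 0" "dt v r = 0"
      using rowdt[of i u] rowdt[of i v] assms(2,4) i by (simp_all add: dt3 mult.commute)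
    then obtain \<mu> where "r = \<mu> *s cr u v" using perp2 False by blast
    then show "r \<in> vec.span {cr u v}" by (auto simp: vec.span_singleton)
  qed
  then have "vec.dim (rows X) \<le> card {cr u v}" by (intro vec.dim_le_card) auto
  then show ?thesis using assms(1) by (simp add: row_rank_def_gen)
qed

lemma dt_add_r: "dt z (u + v) = dt z u + dt z v"
  by (simp add: dt_def sum.distrib algebra_simps)
lemma dt_add_l: "dt (u + v) z = dt u z + dt v z"
  by (simp add: dt_def sum.distrib algebra_simps)
lemma dt_scale_r: "dt z (a *s u) = a * dt z u"
  by (simp add: dt_def sum_distrib_left algebra_simps)
lemma dt_scale_l: "dt (a *s u) z = a * dt u z"
  by (simp add: dt_def sum_distrib_left algebra_simps)
lemma dt_zero_r [simp]: "dt z 0 = 0" by (simp add: dt_def)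
lemma dt_zero_l [simp]: "dt 0 z = 0" by (simp add: dt_def)
lemma dt_comm: "dt u v = dt v u" by (simp add: dt_def mult.commute)
lemma dt_neg_r: "dt z (- u) = - dt z u" by (simp add: dt_def sum_negf)
lemma dt_diff_r: "dt z (u - v) = dt z u - dt z v"
  by (simp add: dt_def sum_subtractf algebra_simps)

lemmas dt_lin = dt_add_r dt_add_l dt_scale_r dt_scale_l dt_neg_r dt_diff_r

lemma dt_axis: "dt w (axis k 1) = w$k"
  by (simp add: dt_def axis_def if_distrib sum.delta sum.delta' cong: if_cong)

lemma dt_mv: "dt z (A *v p) = dt (z v* A) p"
proof -
  have "dt z (A *v p) = (\<Sum>i\<in>UNIV. \<Sum>j\<in>UNIV. z$i * (A$i$j * p$j))"
    by (simp add: dt_def matrix_vector_mult_def sum_distrib_left)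
  also have "\<dots> = (\<Sum>j\<in>UNIV. \<Sum>i\<in>UNIV. z$i * (A$i$j * p$j))" by (rule sum.swap)
  also have "\<dots> = dt (z v* A) p"
    by (simp add: dt_def vector_matrix_mult_def sum_distrib_left mult_ac)
  finally show ?thesis .
qed

lemma zero_by_dt: "(\<forall>p. dt w p = 0) \<Longrightarrow> w = 0"
  by (metis dt_axis vec_eq_iff zero_index)

lemma basis4:
  fixes c d :: "complex^4"
  assumes c0: "c \<noteq> 0" and nd: "\<not> (\<exists>\<mu>. d = \<mu> *s c)"
  shows "\<exists>u3 u4. \<forall>p. \<exists>a b s t. p = a *s c + b *s d + s *s u3 + t *s u4"
proof -
  have "vec.independent {c}" using c0 by (simp add: vec.independent_insert)
  moreover have "d \<notin> vec.span {c}" using nd by (auto simp: vec.span_singleton)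
  ultimately have ind: "vec.independent {d, c}" by (simp add: vec.independent_insert)
  obtain B where B: "{d, c} \<subseteq> B" "B \<subseteq> UNIV" "vec.independent B" "UNIV \<subseteq> vec.span B"
    by (rule vec.maximal_independent_subset_extend[OF subset_UNIV ind])
  have fin: "finite B" by (rule vec.finiteI_independent[OF B(3)])
  have cB: "card B = 4"
    using vec.basis_card_eq_dim[of B UNIV] B vec_dim_card[where 'a=complex and 'n=4] by simp
  have dc: "d \<noteq> c" using nd by (metis vector_smult_lid)
  have "card (B - {c, d}) = 2" using cB B(1) dc fin by (simp add: card_Diff_subset insert_commute)
  then obtain u3 u4 where u: "B - {c,d} = {u3, u4}" "u3 \<noteq> u4" by (auto simp: card_2_iff)
  have Beq: "B = insert c (insert d (insert u3 {u4}))" using u B(1) by blast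
  have dist: "c \<noteq> d" "c \<noteq> u3" "c \<noteq> u4" "d \<noteq> u3" "d \<noteq> u4" "u3 \<noteq> u4"
    using u dc by blast+
  show ?thesis
  proof (rule exI[of _ u3], rule exI[of _ u4], rule allI)
    fix p
    have "p \<in> vec.span B" using B(4) by blast
    then obtain w where "p = (\<Sum>v\<in>B. w v *s v)" using vec.span_finite[OF fin] by auto
    then have "p = w c *s c + w d *s d + w u3 *s u3 + w u4 *s u4"
      using dist by (simp add: Beq add.assoc)
    then show "\<exists>a b s t. p = a *s c + b *s d + s *s u3 + t *s u4" by blast
  qed
qed

lemma orth2:
  fixes a b :: "complex^3"
  shows "\<exists>z. z \<noteq> 0 \<and> dt a z = 0 \<and> dt b z = 0"
proof -
  let ?Z = "(vector [a, b, 0]) :: complex^3^3"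
  have "det ?Z = 0" by (rule det_zero_row(1)[of 3]) (simp add: row_def vec_eq_iff)
  then obtain z where "z \<noteq> 0" "?Z *v z = 0" using ker_of_det0 by blast
  moreover have "(?Z *v z)$1 = dt a z" "(?Z *v z)$2 = dt b z"
    by (simp_all add: matrix_vector_mult_def dt_def)
  ultimately show ?thesis by (metis zero_index)
qed

lemma rank3_K:
  fixes A :: "complex^4^3"
  assumes r: "rank A = 3" and c: "c \<noteq> 0" "A *v c = 0" and v: "A *v v = 0"
  shows "\<exists>\<mu>. v = \<mu> *s c"
proof (rule ccontr)
  assume nd: "\<not> (\<exists>\<mu>. v = \<mu> *s c)"
  obtain u3 u4 where u: "\<forall>p. \<exists>a b s t. p = a *s c + b *s v + s *s u3 + t *s u4"
    using basis4[OF c(1) nd] by blast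
  obtain z where z: "z \<noteq> 0" "dt (A *v u3) z = 0" "dt (A *v u4) z = 0" using orth2 by blast
  have "dt z (A *v p) = 0" for p
  proof -
    obtain a b s t where "p = a *s c + b *s v + s *s u3 + t *s u4" using u by blast
    then show ?thesis using z c v
      by (simp add: matrix_vector_right_distrib vector_scalar_commute dt_lin dt_comm
          vec.scale)
  qed
  then have "z v* A = 0" by (intro zero_by_dt) (simp add: dt_mv)
  then show False using rank3_S[OF r] z by blast
qed

lemma msc_nth [simp]: "msc c M $ i $ j = c * M$i$j"
  by (simp add: msc_def)

lemma msc_zero_iff: "msc c X = 0 \<longleftrightarrow> c = 0 \<or> X = 0"
  by (auto simp: vec_eq_iff)

lemma msc_mv: "msc c X *v x = c *s (X *v x)"
  by (simp add: vec_eq_iff matrix_vector_mult_def sum_distrib_left mult.assoc)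

lemma vm_msc: "y v* msc c X = c *s (y v* X)"
  by (simp add: vec_eq_iff vector_matrix_mult_def sum_distrib_left mult_ac)

lemma transpose_msc: "transpose (msc c X) = msc c (transpose X)"
  by (simp add: vec_eq_iff transpose_def)

lemma msc_msc: "msc a (msc b X) = msc (a*b) X"
  by (simp add: vec_eq_iff)

lemma msc_one: "msc 1 X = X"
  by (simp add: vec_eq_iff)

lemma det_msc: "det (msc c (X::complex^3^3)) = c^3 * det X"
  by (simp add: det_3 algebra_simps power3_eq_cube)

lemma indep_of_nonprop:
  assumes "X \<noteq> 0" "Y \<noteq> 0" "\<not> mproportional X Y" "msc a X + msc b Y = 0"
  shows "a = 0 \<and> b = 0"
proof (cases "a = 0")
  case True
  then have "msc b Y = 0" using assms(4) by (simp add: vec_eq_iff)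
  then show ?thesis using True assms(2) by (simp add: msc_zero_iff)
next
  case False
  have "X = msc (- b / a) Y" using assms(4) False
    by (simp add: vec_eq_iff field_simps) (metis add_eq_0_iff2 mult.commute)
  moreover have "- b / a \<noteq> 0"
  proof
    assume "- b / a = 0"
    then have "X = 0" using \<open>X = msc (- b / a) Y\<close> by (simp add: msc_zero_iff)
    then show False using assms(1) by simp
  qed
  ultimately show ?thesis using assms(3) unfolding mproportional_def by blast
qed

definition inl :: "complex^3^3 \<Rightarrow> complex^3^3 \<Rightarrow> complex^3^3 \<Rightarrow> bool" where
  "inl L0 L1 M \<longleftrightarrow> (\<exists>a b. M = msc a L0 + msc b L1)"

lemma on_line_inl: "on_line L0 L1 M \<longleftrightarrow> M \<noteq> 0 \<and> inl L0 L1 M"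
  by (simp add: on_line_def inl_def)

lemma inl_comb:
  assumes "inl L0 L1 X" "inl L0 L1 Y"
  shows "inl L0 L1 (msc a X + msc b Y)"
proof -
  obtain a1 b1 a2 b2 where "X = msc a1 L0 + msc b1 L1" "Y = msc a2 L0 + msc b2 L1"
    using assms by (auto simp: inl_def)
  then show ?thesis unfolding inl_def
    by (intro exI[of _ "a*a1 + b*a2"] exI[of _ "a*b1+b*b2"]) (simp add: vec_eq_iff algebra_simps)
qed

lemma span2:
  assumes ind: "mat_lin_indep L0 L1"
    and X: "on_line L0 L1 X" and Y: "on_line L0 L1 Y" and np: "\<not> mproportional X Y"
    and Z: "inl L0 L1 Z"
  shows "\<exists>\<alpha> \<beta>. Z = msc \<alpha> X + msc \<beta> Y"
proof -
  obtain a1 b1 where x: "X = msc a1 L0 + msc b1 L1" and X0: "X \<noteq> 0"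
    using X by (auto simp: on_line_def)
  obtain a2 b2 where y: "Y = msc a2 L0 + msc b2 L1" and Y0: "Y \<noteq> 0"
    using Y by (auto simp: on_line_def)
  obtain a b where z: "Z = msc a L0 + msc b L1" using Z by (auto simp: inl_def)
  define D where "D = a1*b2 - a2*b1"
  have D0: "D \<noteq> 0"
  proof
    assume D: "D = 0"
    have e1: "msc b2 X + msc (- b1) Y = 0"
      using D unfolding x y D_def by (simp add: vec_eq_iff algebra_simps)
    have e2: "msc a2 X + msc (- a1) Y = 0"
      using D unfolding x y D_def by (simp add: vec_eq_iff algebra_simps)
    have "b2 = 0 \<and> b1 = 0" "a2 = 0 \<and> a1 = 0"
      using indep_of_nonprop[OF X0 Y0 np e1] indep_of_nonprop[OF X0 Y0 np e2] by auto
    then have "X = 0" using x by (simp add: vec_eq_iff)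
    then show False using X0 by simp
  qed
  have "\<forall>i j. Z$i$j = ((a*b2 - b*a2) * X$i$j + (b*a1 - a*b1) * Y$i$j) / D"
    using D0 unfolding x y z by (simp add: eq_divide_eq D_def algebra_simps)
  then have "Z = msc ((a*b2 - b*a2)/D) X + msc ((b*a1 - a*b1)/D) Y"
    by (simp add: vec_eq_iff add_divide_distrib)
  then show ?thesis by blast
qed

definition tr1 :: "complex^3^3 \<Rightarrow> complex^3^3 \<Rightarrow> complex" where
  "tr1 X Y = det (\<chi> i j. if i = 1 then Y$i$j else X$i$j)
     + det (\<chi> i j. if i = 2 then Y$i$j else X$i$j) + det (\<chi> i j. if i = 3 then Y$i$j else X$i$j)"

lemma det_pencil:
  "det (X + msc l Y) = det X + l * tr1 X Y + l^2 * tr1 Y X + l^3 * det Y"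
  by (simp add: tr1_def det_3 algebra_simps power2_eq_square power3_eq_cube)

lemma cr_pencil:
  "cr (u + l *s u') (v + l *s v') = cr u v + l *s (cr u v' + cr u' v) + l^2 *s cr u' v'"
  by (simp add: vec3_eq algebra_simps power2_eq_square)

lemma row_pencil: "row a (X + msc l Y) = row a X + l *s row a Y"
  by (simp add: vec_eq_iff row_def)

lemma gen_facts:
  assumes G: "generic_line_with L0 L1 F"
  shows "mat_lin_indep L0 L1"
    and "\<And>j. j \<in> {1,2,3} \<Longrightarrow> on_line L0 L1 (F j)"
    and "\<And>j. j \<in> {1,2,3} \<Longrightarrow> rank (F j) = 2"
    and "\<And>j. j \<in> {1,2,3} \<Longrightarrow> det (F j) = 0"
    and "\<And>j. j \<in> {1,2,3} \<Longrightarrow> F j \<noteq> 0"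
    and "\<And>j. j \<in> {1,2,3} \<Longrightarrow> inl L0 L1 (F j)"
    and "\<And>j k. j \<in> {1,2,3} \<Longrightarrow> k \<in> {1,2,3} \<Longrightarrow> j \<noteq> k \<Longrightarrow> \<not> mproportional (F j) (F k)"
    and "\<And>M. on_line L0 L1 M \<Longrightarrow> rank M = 2 \<Longrightarrow> \<exists>j\<in>{1,2,3}. mproportional M (F j)"
  using G rank2_det0 unfolding generic_line_with_def on_line_inl by blast+

lemma finite_subsing: "(\<forall>x\<in>S. \<forall>y\<in>S. x = y) \<Longrightarrow> finite S"
proof (cases "S = {}")
  case False
  assume h: "\<forall>x\<in>S. \<forall>y\<in>S. x = y"
  then obtain x where "x \<in> S" using False by blast
  then have "S \<subseteq> {x}" using h by blast
  then show ?thesis using finite_subset by blast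
qed simp

lemma G0:
  assumes G: "generic_line_with L0 L1 F"
  shows "\<exists>l. det (F 2 + msc l (F 1)) \<noteq> 0"
proof (rule ccontr)
  assume "\<not> ?thesis"
  then have H: "\<And>l. det (F 2 + msc l (F 1)) = 0" by blast
  note gf = gen_facts[OF G]
  have np21: "\<not> mproportional (F 2) (F 1)" using gf(7)[of 2 1] by simp
  have F10: "F 1 \<noteq> 0" and F20: "F 2 \<noteq> 0" using gf(5) by auto
  obtain a b where cab: "cr (row a (F 1)) (row b (F 1)) \<noteq> 0"
    using gf(3)[of 1] rank2_iff by auto
  then obtain i where ci: "cr (row a (F 1)) (row b (F 1)) $ i \<noteq> 0"
    by (metis vec_eq_iff zero_index)
  define C0 where "C0 = cr (row a (F 2)) (row b (F 2)) $ i"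
  define C1 where "C1 = (cr (row a (F 2)) (row b (F 1)) + cr (row a (F 1)) (row b (F 2))) $ i"
  define C2 where "C2 = cr (row a (F 1)) (row b (F 1)) $ i"
  define q where "q = [:C0, C1, C2:]"
  have q0: "q \<noteq> 0" using ci by (simp add: q_def C2_def)
  have qv: "cr (row a (F 2 + msc l (F 1))) (row b (F 2 + msc l (F 1))) $ i = poly q l" for l
    by (simp add: row_pencil cr_pencil q_def C0_def C1_def C2_def algebra_simps power2_eq_square)
  define S where "S = {l. mproportional (F 2 + msc l (F 1)) (F 3)}"
  have finS: "finite S"
  proof (rule finite_subsing, intro ballI)
    fix x y assume "x \<in> S" "y \<in> S"
    then obtain c d where cd: "F 2 + msc x (F 1) = msc c (F 3)" "c \<noteq> 0"
      "F 2 + msc y (F 1) = msc d (F 3)" "d \<noteq> 0"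
      by (auto simp: S_def mproportional_def)
    have "msc (1 - c/d) (F 2) + msc (x - (c/d)*y) (F 1) = 0"
    proof -
      have "\<forall>i j. (F 2 + msc x (F 1))$i$j = c * F 3 $i$j" "\<forall>i j. (F 2 + msc y (F 1))$i$j = d * F 3 $i$j"
        using cd by (simp_all add: vec_eq_iff)
      then have "\<forall>i j. F 2$i$j + x * F 1$i$j = (c/d) * (F 2$i$j + y * F 1$i$j)"
        using cd(4) by simp
      then show ?thesis by (simp add: vec_eq_iff algebra_simps)
    qed
    from indep_of_nonprop[OF F20 F10 np21 this] cd(4) show "x = y"
      by auto
  qed
  have fin: "finite ({l. poly q l = 0} \<union> {0} \<union> S)"
    using poly_roots_finite[OF q0] finS by simp
  have "\<exists>l. l \<notin> {l. poly q l = 0} \<union> {0} \<union> S"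
    by (rule ex_new_if_finite[OF infinite_UNIV_char_0 fin])
  then obtain l where l: "l \<notin> {l. poly q l = 0} \<union> {0} \<union> S" by blast
  define Z where "Z = F 2 + msc l (F 1)"
  have crZ: "cr (row a Z) (row b Z) \<noteq> 0" using qv[of l] l unfolding Z_def
    by (metis (mono_tags, lifting) UnCI mem_Collect_eq zero_index)
  have rZ: "rank Z = 2" using rank_eq2I[OF _ crZ] H unfolding Z_def by blast
  have Z0: "Z \<noteq> 0" using crZ by (auto simp: row_def vec3_zero)
  have "inl L0 L1 (msc 1 (F 2) + msc l (F 1))"
    by (rule inl_comb) (use gf(6) in auto)
  then have "on_line L0 L1 Z" using Z0 by (simp add: on_line_inl Z_def msc_one)
  then obtain k where k: "k \<in> {1,2,3}" "mproportional Z (F k)" using gf(8) rZ by blast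
  then obtain c where c: "Z = msc c (F k)" "c \<noteq> 0" by (auto simp: mproportional_def)
  show False
  proof -
    { assume "k = 1"
      then have "msc 1 (F 2) + msc (l - c) (F 1) = 0"
        using c unfolding Z_def by (simp add: vec_eq_iff algebra_simps)
      from indep_of_nonprop[OF F20 F10 np21 this] have False by simp }
    moreover
    { assume "k = 2"
      then have "msc (1 - c) (F 2) + msc l (F 1) = 0"
        using c unfolding Z_def by (simp add: vec_eq_iff algebra_simps)
      from indep_of_nonprop[OF F20 F10 np21 this] have False using l by simp }
    moreover
    { assume "k = 3"
      then have "l \<in> S" using k unfolding S_def Z_def by simp
      then have False using l by simp }
    ultimately show False using k(1) by auto
  qed
qed


lemma G0Z:
  assumes G: "generic_line_with L0 L1 F"
  shows "\<exists>Z. inl L0 L1 Z \<and> det Z \<noteq> 0"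
proof -
  obtain l where "det (F 2 + msc l (F 1)) \<noteq> 0" using G0[OF G] by blast
  moreover have "inl L0 L1 (msc 1 (F 2) + msc l (F 1))"
    using gen_facts(6)[OF G] by (intro inl_comb) auto
  ultimately show ?thesis by (auto simp: msc_one)
qed

lemma ROOTS:
  assumes G: "generic_line_with L0 L1 F" and X: "on_line L0 L1 X" and dX: "det X = 0"
  shows "\<exists>k\<in>{1,2,3}. mproportional X (F k)"
proof -
  note gf = gen_facts[OF G]
  have np21: "\<not> mproportional (F 2) (F 1)" using gf(7)[of 2 1] by simp
  have np31: "\<not> mproportional (F 3) (F 1)" using gf(7)[of 3 1] by simp
  have np32: "\<not> mproportional (F 3) (F 2)" using gf(7)[of 3 2] by simp
  have F10: "F 1 \<noteq> 0" and F20: "F 2 \<noteq> 0" and F30: "F 3 \<noteq> 0" using gf(5) by auto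
  have d1: "det (F 1) = 0" and d2: "det (F 2) = 0" and d3: "det (F 3) = 0" using gf(4) by auto
  define t1 where "t1 = tr1 (F 2) (F 1)"
  define t2 where "t2 = tr1 (F 1) (F 2)"
  have psi: "det (F 2 + msc l (F 1)) = l * t1 + l^2 * t2" for l
    using det_pencil[of "F 2" l "F 1"] d1 d2 by (simp add: t1_def t2_def)
  obtain l0 where l0: "det (F 2 + msc l0 (F 1)) \<noteq> 0" using G0[OF G] by blast
  obtain \<alpha>3 \<beta>3 where f3: "F 3 = msc \<alpha>3 (F 2) + msc \<beta>3 (F 1)"
    using span2[OF gf(1) gf(2)[of 2] gf(2)[of 1] np21 gf(6)[of 3]] by auto
  have a3: "\<alpha>3 \<noteq> 0"
  proof
    assume "\<alpha>3 = 0"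
    then have "F 3 = msc \<beta>3 (F 1)" using f3 by (simp add: vec_eq_iff)
    moreover have "\<beta>3 \<noteq> 0" using F30 calculation by (auto simp: msc_zero_iff)
    ultimately show False using np31 unfolding mproportional_def by blast
  qed
  have b3: "\<beta>3 \<noteq> 0"
  proof
    assume "\<beta>3 = 0"
    then have "F 3 = msc \<alpha>3 (F 2)" using f3 by (simp add: vec_eq_iff)
    then show False using np32 a3 unfolding mproportional_def by blast
  qed
  define l3 where "l3 = \<beta>3 / \<alpha>3"
  have l30: "l3 \<noteq> 0" using a3 b3 by (simp add: l3_def)
  have F3eq: "F 3 = msc \<alpha>3 (F 2 + msc l3 (F 1))"
    using f3 a3 by (simp add: vec_eq_iff l3_def algebra_simps)
  have "det (F 2 + msc l3 (F 1)) = 0"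
    using d3 a3 unfolding F3eq det_msc by simp
  then have e3: "t1 + l3 * t2 = 0" using l30 unfolding psi
    by (simp add: power2_eq_square algebra_simps) (metis mult_eq_0_iff distrib_left)
  have t20: "t2 \<noteq> 0"
  proof
    assume "t2 = 0"
    then have "t1 = 0" using e3 by simp
    then show False using l0 \<open>t2 = 0\<close> unfolding psi by simp
  qed
  have iX: "inl L0 L1 X" using X by (simp add: on_line_inl)
  obtain \<alpha> \<beta> where x: "X = msc \<alpha> (F 2) + msc \<beta> (F 1)"
    using span2[OF gf(1) gf(2)[of 2] gf(2)[of 1] np21 iX] by blast
  have X0: "X \<noteq> 0" using X by (simp add: on_line_def)
  show ?thesis
  proof (cases "\<alpha> = 0")
    case True
    then have "X = msc \<beta> (F 1)" using x by (simp add: vec_eq_iff)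
    moreover have "\<beta> \<noteq> 0" using X0 calculation by (auto simp: msc_zero_iff)
    ultimately show ?thesis unfolding mproportional_def by auto
  next
    case False
    define l where "l = \<beta> / \<alpha>"
    have Xeq: "X = msc \<alpha> (F 2 + msc l (F 1))"
      using x False by (simp add: vec_eq_iff l_def algebra_simps)
    have dl: "det (F 2 + msc l (F 1)) = 0" using dX False unfolding Xeq det_msc by simp
    show ?thesis
    proof (cases "l = 0")
      case True
      then have "X = msc \<alpha> (F 2)" using Xeq by (simp add: vec_eq_iff)
      then show ?thesis using False unfolding mproportional_def by auto
    next
      case l0': False
      have "t1 + l * t2 = 0" using dl l0' unfolding psi
        by (simp add: power2_eq_square algebra_simps) (metis mult_eq_0_iff distrib_left)
      with e3 t20 have "l = l3" by (metis add_left_cancel mult_cancel_right)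
      then have "X = msc (\<alpha> / \<alpha>3) (F 3)"
        using Xeq F3eq a3 by (simp add: msc_msc)
      moreover have "\<alpha> / \<alpha>3 \<noteq> 0" using False a3 by simp
      ultimately have "mproportional X (F 3)" unfolding mproportional_def by blast
      then show ?thesis by blast
    qed
  qed
qed

lemma transpose_add': "transpose (A + B) = transpose A + transpose (B::complex^3^3)"
  by (simp add: vec_eq_iff transpose_def)

lemma transpose_inj: "transpose (A::complex^3^3) = transpose B \<longleftrightarrow> A = B"
  by (metis transpose_transpose)

lemma transpose_zero_iff: "transpose (A::complex^3^3) = 0 \<longleftrightarrow> A = 0"
  by (simp add: vec_eq_iff transpose_def) blast

lemma mprop_transpose: "mproportional (transpose X) (transpose Y) \<longleftrightarrow> mproportional X (Y::complex^3^3)"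
  unfolding mproportional_def by (simp add: transpose_msc[symmetric] transpose_inj)

lemma GT:
  assumes G: "generic_line_with L0 L1 F"
  shows "generic_line_with (transpose L0) (transpose L1) (\<lambda>j. transpose (F j))"
proof -
  note gf = gen_facts[OF G]
  have ind: "mat_lin_indep (transpose L0) (transpose L1)"
    using gf(1) unfolding mat_lin_indep_def
    by (simp add: transpose_msc[symmetric] transpose_add'[symmetric] transpose_zero_iff)
  have ol: "on_line (transpose L0) (transpose L1) (transpose X) \<longleftrightarrow> on_line L0 L1 X" for X
    unfolding on_line_def
    by (simp add: transpose_msc[symmetric] transpose_add'[symmetric] transpose_zero_iff transpose_inj)
  show ?thesis
    unfolding generic_line_with_def
  proof (intro conjI ballI allI impI)
    show "mat_lin_indep (transpose L0) (transpose L1)" by (rule ind)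
  next
    fix j :: nat assume "j \<in> {1,2,3}"
    then show "on_line (transpose L0) (transpose L1) (transpose (F j))"
      using gf(2) ol by blast
  next
    fix j :: nat assume "j \<in> {1,2,3}"
    then show "rank (transpose (F j)) = 2"
      using gf(3) rank2_transpose by blast
  next
    fix j k :: nat assume "j \<in> {1,2,3}" "k \<in> {1,2,3}" "j \<noteq> k"
    then show "\<not> mproportional (transpose (F j)) (transpose (F k))"
      using gf(7) mprop_transpose by blast
  next
    fix M assume M: "on_line (transpose L0) (transpose L1) M \<and> rank M = 2"
    then have "on_line L0 L1 (transpose M)" using ol[of "transpose M"] by simp
    moreover have "rank (transpose M) = 2" using M rank2_transpose by blast
    ultimately obtain j where "j \<in> {1,2,3}" "mproportional (transpose M) (F j)" using gf(8) by blast
    then show "\<exists>j\<in>{1,2,3}. mproportional M (transpose (F j))"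
      using mprop_transpose[of "transpose M" "F j"] by auto
  qed
qed

definition fcr :: "complex^3^3 \<Rightarrow> complex^3^3 \<Rightarrow> complex^3 \<Rightarrow> complex^3" where
  "fcr L0 L1 x = cr (L0 *v x) (L1 *v x)"

lemma cr_self_scale: "cr (k *s u) u = 0" "cr u (k *s u) = 0" "cr u 0 = 0" "cr 0 u = 0"
  by (simp_all add: vec3_zero)

lemma mv_pencil: "(msc a X + msc b Y) *v x = a *s (X *v x) + b *s (Y *v x)"
  by (simp add: matrix_vector_mult_add_rdistrib msc_mv)

lemma BP:
  assumes G: "generic_line_with L0 L1 F"
    and nx: "\<forall>j\<in>{1,2,3}. ex j \<noteq> 0 \<and> F j *v ex j = 0"
  shows "base_points (fcr L0 L1) = {x. \<exists>j\<in>{1,2,3}. proportional x (ex j)}"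
proof (intro set_eqI iffI)
  note gf = gen_facts[OF G]
  fix x
  assume "x \<in> base_points (fcr L0 L1)"
  then have x0: "x \<noteq> 0" and c0: "cr (L0 *v x) (L1 *v x) = 0"
    by (auto simp: base_points_def fcr_def)
  have "\<exists>a b. (a \<noteq> 0 \<or> b \<noteq> 0) \<and> (msc a L0 + msc b L1) *v x = 0"
  proof (cases "L0 *v x = 0")
    case True
    then show ?thesis by (intro exI[of _ 1] exI[of _ 0]) (simp add: mv_pencil)
  next
    case False
    obtain \<mu> where "L1 *v x = \<mu> *s (L0 *v x)" using cr_zero_prop[OF False c0] by blast
    then show ?thesis by (intro exI[of _ "-\<mu>"] exI[of _ 1]) (simp add: mv_pencil)
  qed
  then obtain a b where ab: "a \<noteq> 0 \<or> b \<noteq> 0" "(msc a L0 + msc b L1) *v x = 0" by blast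
  define X where "X = msc a L0 + msc b L1"
  have X0: "X \<noteq> 0" using gf(1) ab(1) unfolding mat_lin_indep_def X_def by blast
  have olX: "on_line L0 L1 X" using X0 unfolding on_line_def X_def by blast
  have dX: "det X = 0" using ker_det_nz[of X x] ab(2) x0 X_def by blast
  obtain k c where k: "k \<in> {1,2,3}" "X = msc c (F k)" "c \<noteq> 0"
    using ROOTS[OF G olX dX] by (auto simp: mproportional_def)
  have "F k *v x = 0" using ab(2) k unfolding X_def[symmetric] by (simp add: msc_mv)
  then obtain \<mu> where "x = \<mu> *s ex k" using rank2_kernel[OF gf(3)[OF k(1)]] nx k(1) by blast
  moreover have "\<mu> \<noteq> 0" using x0 calculation by auto
  ultimately show "x \<in> {x. \<exists>j\<in>{1,2,3}. proportional x (ex j)}"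
    using k(1) by (auto simp: proportional_def)
next
  note gf = gen_facts[OF G]
  fix x
  assume "x \<in> {x. \<exists>j\<in>{1,2,3}. proportional x (ex j)}"
  then obtain k c where k: "k \<in> {1,2,3}" "x = c *s ex k" "c \<noteq> 0"
    by (auto simp: proportional_def)
  have x0: "x \<noteq> 0" using k nx by auto
  have Fx: "F k *v x = 0" using bspec[OF nx k(1)] k(2) by (simp add: vector_scalar_commute)
  obtain a b where ab: "F k = msc a L0 + msc b L1" using gf(6)[OF k(1)] by (auto simp: inl_def)
  have "a \<noteq> 0 \<or> b \<noteq> 0" using gf(5)[OF k(1)] ab by (auto simp: vec_eq_iff)
  moreover have e: "a *s (L0 *v x) + b *s (L1 *v x) = 0" using Fx ab by (simp add: mv_pencil)
  ultimately have "cr (L0 *v x) (L1 *v x) = 0"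
  proof (elim disjE)
    assume a: "a \<noteq> 0"
    then have "L0 *v x = (- b / a) *s (L1 *v x)" using e
      by (simp add: vec_eq_iff field_simps) (metis add_eq_0_iff2 mult.commute)
    then show ?thesis by (simp add: vec3_zero algebra_simps)
  next
    assume b: "b \<noteq> 0"
    then have "L1 *v x = (- a / b) *s (L0 *v x)" using e
      by (simp add: vec_eq_iff field_simps) (metis add_eq_0_iff2 mult.commute add.commute)
    then show ?thesis by (simp add: vec3_zero algebra_simps)
  qed
  then show "x \<in> base_points (fcr L0 L1)" using x0 by (simp add: base_points_def fcr_def)
qed

lemma TD:
  assumes G: "generic_line_with L0 L1 F"
    and nx: "\<forall>j\<in>{1,2,3}. ex j \<noteq> 0 \<and> F j *v ex j = 0"
  shows "three_distinct_points {x. \<exists>j\<in>{1,2,3}. proportional x (ex j)}"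
proof -
  note gf = gen_facts[OF G]
  obtain Z where Z: "inl L0 L1 Z" "det Z \<noteq> 0" using G0Z[OF G] by blast
  have np: "\<not> proportional (ex k) (ex l)" if kl: "k \<in> {1,2,3}" "l \<in> {1,2,3}" "k \<noteq> l" for k l
  proof
    assume "proportional (ex k) (ex l)"
    then obtain c where c: "c \<noteq> 0" "ex k = c *s ex l" by (auto simp: proportional_def)
    have "c *s (F k *v ex l) = 0" using c bspec[OF nx kl(1)] by (simp add: vector_scalar_commute)
    then have Fk: "F k *v ex l = 0" using c(1) by (simp add: vec_eq_iff)
    have Fl: "F l *v ex l = 0" using bspec[OF nx kl(2)] by simp
    obtain \<alpha> \<beta> where "Z = msc \<alpha> (F k) + msc \<beta> (F l)"
      using span2[OF gf(1) gf(2)[OF kl(1)] gf(2)[OF kl(2)] gf(7)[OF kl] Z(1)] by blast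
    then have "Z *v ex l = 0" using Fk Fl by (simp add: mv_pencil)
    then have "ex l = 0" using ker_det_nz[OF Z(2)] by blast
    then show False using bspec[OF nx kl(2)] by simp
  qed
  show ?thesis unfolding three_distinct_points_def
    apply (rule exI[of _ "ex 1"], rule exI[of _ "ex 2"], rule exI[of _ "ex 3"])
    using nx np[of 1 2] np[of 1 3] np[of 2 3] by auto
qed

lemma quadratic_fcr: "quadratic_map (fcr L0 L1)"
  unfolding quadratic_map_def
proof (rule exI[of _ "\<chi> i a b. (if i = 1 then L0$2$a*L1$3$b - L0$3$a*L1$2$b
        else if i = 2 then L0$3$a*L1$1$b - L0$1$a*L1$3$b else L0$1$a*L1$2$b - L0$2$a*L1$1$b)"],
    intro allI)
  fix x :: "complex^3"
  show "fcr L0 L1 x = (\<chi> i. \<Sum>a\<in>UNIV. \<Sum>b\<in>UNIV.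
     (\<chi> i a b. (if i = 1 then L0$2$a*L1$3$b - L0$3$a*L1$2$b
        else if i = 2 then L0$3$a*L1$1$b - L0$1$a*L1$3$b else L0$1$a*L1$2$b - L0$2$a*L1$1$b))$i$a$b * x$a * x$b)"
    by (simp add: vec3_eq fcr_def sum_3 matrix_vector_mult_def algebra_simps)
qed

lemma fcr_scale: "fcr L0 L1 (c *s x) = (c^2) *s fcr L0 L1 x"
  by (simp add: fcr_def vector_scalar_commute vec3_eq algebra_simps power2_eq_square)

lemma fcr_0: "fcr L0 L1 0 = 0"
  by (simp add: fcr_def vec3_zero)

lemma GF: "\<exists>c. fcr (transpose L0) (transpose L1) (fcr L0 L1 x) = c *s x"
proof -
  define y where "y = fcr L0 L1 x"
  have o1: "dt (y v* L0) x = 0" "dt (y v* L1) x = 0"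
    unfolding y_def fcr_def dt_mv[symmetric]
    by (simp_all add: cr_orth1 cr_orth2)
  have gy: "fcr (transpose L0) (transpose L1) (fcr L0 L1 x) = cr (y v* L0) (y v* L1)"
    by (simp add: fcr_def y_def)
  show ?thesis
  proof (cases "cr (y v* L0) (y v* L1) = 0")
    case True
    then show ?thesis unfolding gy by (intro exI[of _ 0]) simp
  next
    case False
    show ?thesis
    proof (cases "x = 0")
      case True
      then have "y = 0" by (simp add: y_def fcr_0)
      then show ?thesis unfolding gy by (intro exI[of _ 0]) (simp add: cr_self_scale)
    next
      case x0: False
      obtain \<mu> where mu: "x = \<mu> *s cr (y v* L0) (y v* L1)" using perp2[OF o1] False by blast
      then have "\<mu> \<noteq> 0" using x0 by auto
      then have "cr (y v* L0) (y v* L1) = (1/\<mu>) *s x" using mu by (simp add: vec_eq_iff)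
      then show ?thesis unfolding gy by blast
    qed
  qed
qed


lemma NZ:
  assumes G: "generic_line_with L0 L1 F"
    and nx: "\<forall>j\<in>{1,2,3}. ex j \<noteq> 0 \<and> F j *v ex j = 0"
    and ny: "\<forall>j\<in>{1,2,3}. ey j \<noteq> 0 \<and> ey j v* F j = 0"
  shows "\<exists>x. fcr (transpose L0) (transpose L1) (fcr L0 L1 x) \<noteq> 0"
proof -
  note gf = gen_facts[OF G]
  obtain Z where Z: "inl L0 L1 Z" "det Z \<noteq> 0" using G0Z[OF G] by blast
  define w where "w l = ey l v* Z" for l
  have w0: "w l \<noteq> 0" if l: "l \<in> {1,2,3}" for l
  proof
    assume "w l = 0"
    then have "transpose Z *v ey l = 0" by (simp add: w_def)
    then have "ey l = 0" using ker_det_nz[of "transpose Z"] Z(2) by (simp add: det_transpose)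
    then show False using bspec[OF ny l] by simp
  qed
  have nx': "\<forall>j\<in>{1,2,3}. ey j \<noteq> 0 \<and> transpose (F j) *v ey j = 0" using ny by simp
  note BPg = BP[OF GT[OF G] nx']
  note BPf = BP[OF G nx]
  have claim: "\<exists>l\<in>{1,2,3}. dt (w l) x = 0"
    if h: "fcr (transpose L0) (transpose L1) (fcr L0 L1 x) = 0" for x
  proof -
    define y where "y = fcr L0 L1 x"
    show ?thesis
    proof (cases "y = 0")
      case True
      show ?thesis
      proof (cases "x = 0")
        case True
        then show ?thesis by auto
      next
        case False
        then have "x \<in> base_points (fcr L0 L1)" using \<open>y = 0\<close> by (simp add: base_points_def y_def)
        then obtain k c where k: "k \<in> {1,2,3}" "x = c *s ex k"
          unfolding BPf by (auto simp: proportional_def)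
        define l where "l = (if k = 1 then 2 else 1::nat)"
        have l: "l \<in> {1,2,3}" "l \<noteq> k" using k(1) by (auto simp: l_def)
        obtain \<alpha> \<beta> where Zs: "Z = msc \<alpha> (F l) + msc \<beta> (F k)"
          using span2[OF gf(1) gf(2)[OF l(1)] gf(2)[OF k(1)] gf(7)[OF l(1) k(1) l(2)] Z(1)] by blast
        have "Z *v ex k = \<alpha> *s (F l *v ex k)" using Zs bspec[OF nx k(1)] by (simp add: mv_pencil)
        then have "dt (w l) (ex k) = \<alpha> * dt (ey l v* F l) (ex k)"
          by (simp add: w_def dt_mv[symmetric] dt_scale_r)
        then have "dt (w l) (ex k) = 0" using bspec[OF ny l(1)] by simp
        then show ?thesis using l k(2) by (auto simp: dt_scale_r)
      qed
    next
      case False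
      have "y \<in> base_points (fcr (transpose L0) (transpose L1))"
        using False h by (simp add: base_points_def y_def)
      then obtain l c where l: "l \<in> {1,2,3}" "y = c *s ey l" "c \<noteq> 0"
        unfolding BPg by (auto simp: proportional_def)
      have o: "dt y (L0 *v x) = 0" "dt y (L1 *v x) = 0"
        unfolding y_def fcr_def using cr_orth1 cr_orth2 by (simp_all add: dt_comm)
      then have o2: "dt (ey l) (L0 *v x) = 0" "dt (ey l) (L1 *v x) = 0"
        using l by (simp_all add: dt_scale_l)
      obtain a b where "Z = msc a L0 + msc b L1" using Z(1) by (auto simp: inl_def)
      then have "dt (w l) x = 0" using o2
        by (simp add: w_def dt_mv[symmetric] mv_pencil dt_add_r dt_scale_r)
      then show ?thesis using l(1) by blast
    qed
  qed
  define q where "q l = [: w l $ 1, w l $ 2, w l $ 3 :]" for l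
  have q0: "q l \<noteq> 0" if "l \<in> {1,2,3}" for l
    using w0[OF that] by (auto simp: q_def vec3_zero)
  have fin: "finite (\<Union>l\<in>{1,2,3::nat}. {t. poly (q l) t = 0})"
    using poly_roots_finite q0 by blast
  have "\<exists>t. t \<notin> (\<Union>l\<in>{1,2,3::nat}. {t. poly (q l) t = 0})"
    by (rule ex_new_if_finite[OF infinite_UNIV_char_0 fin])
  then obtain t where t: "\<And>l. l \<in> {1,2,3} \<Longrightarrow> poly (q l) t \<noteq> 0" by blast
  define x :: "complex^3" where "x = vector [1, t, t^2]"
  have dq: "dt (w l) x = poly (q l) t" for l
    by (simp add: x_def q_def dt3 algebra_simps power2_eq_square)
  show ?thesis
  proof (rule exI[of _ x], rule notI)
    assume "fcr (transpose L0) (transpose L1) (fcr L0 L1 x) = 0"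
    then obtain l where "l \<in> {1,2,3}" "dt (w l) x = 0" using claim by blast
    then show False using t dq by metis
  qed
qed

lemma bil_dt: "bil x M y = dt x (M *v y)"
  by (simp add: bil_def dt_def matrix_vector_mult_def sum_distrib_left mult.assoc)

lemma bil_add_l: "bil (x + x') M y = bil x M y + bil x' M y"
  by (simp add: bil_dt dt_add_l)
lemma bil_add_r: "bil x M (y + y') = bil x M y + bil x M y'"
  by (simp add: bil_dt dt_add_r matrix_vector_right_distrib)
lemma bil_scale_l: "bil (c *s x) M y = c * bil x M y"
  by (simp add: bil_dt dt_scale_l)
lemma bil_scale_r: "bil x M (c *s y) = c * bil x M y"
  by (simp add: bil_dt dt_scale_r vector_scalar_commute)
lemma bil_zero_l [simp]: "bil 0 M y = 0"
  by (simp add: bil_dt)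
lemma bil_zero_r [simp]: "bil x M 0 = 0"
  by (simp add: bil_dt)
lemma bil_madd: "bil x (A + B) y = bil x A y + bil x B y"
  by (simp add: bil_dt matrix_vector_mult_add_rdistrib dt_add_r)
lemma bil_msc: "bil x (msc c A) y = c * bil x A y"
  by (simp add: bil_dt msc_mv dt_scale_r)

lemmas bil_lin = bil_add_l bil_add_r bil_scale_l bil_scale_r bil_madd bil_msc

lemma vm_transpose: "(x::complex^'m) v* transpose A = A *v x"
  using transpose_matrix_vector[of "transpose A" x] by simp

lemma dt_transpose_mv: "dt v (transpose N *v p) = dt p (N *v v)"
proof -
  have "dt v (transpose N *v p) = dt (transpose N *v p) v" by (rule dt_comm)
  also have "\<dots> = dt (p v* N) v" by (simp only: transpose_matrix_vector)
  also have "\<dots> = dt p (N *v v)" by (simp only: dt_mv)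
  finally show ?thesis .
qed

lemma bil_quad: "bil p (transpose A2 ** M ** A1) v = bil (A2 *v p) M (A1 *v v)"
proof -
  have "bil p (transpose A2 ** M ** A1) v = dt p (transpose A2 *v (M *v (A1 *v v)))"
    by (simp only: bil_dt matrix_vector_mul_assoc[symmetric])
  also have "\<dots> = dt (p v* transpose A2) (M *v (A1 *v v))" by (simp only: dt_mv)
  also have "\<dots> = bil (A2 *v p) M (A1 *v v)" by (simp only: vm_transpose bil_dt)
  finally show ?thesis .
qed

lemma qf_quad: "qf (quad_of A1 A2 M) p = bil (A2 *v p) M (A1 *v p)"
  by (simp add: qf_def quad_of_def bil_quad)

lemma grad_dt: "dt v ((N + transpose N) *v p) = bil v N p + bil p N v"
proof -
  have "dt v ((N + transpose N) *v p) = dt v (N *v p) + dt v (transpose N *v p)"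
    by (simp only: matrix_vector_mult_add_rdistrib dt_add_r)
  also have "\<dots> = bil v N p + bil p N v" by (simp only: bil_dt dt_transpose_mv)
  finally show ?thesis .
qed

lemma entry_lemma:
  "((R2 ** X) ** transpose R1) $ i $ k = bil (R2 $ i) X (R1 $ k)"
proof -
  have "((R2 ** X) ** transpose R1) $ i $ k = (\<Sum>b\<in>UNIV. \<Sum>a\<in>UNIV. R2$i$a * X$a$b * R1$k$b)"
    by (simp add: matrix_matrix_mult_def transpose_def sum_distrib_right)
  also have "\<dots> = (\<Sum>a\<in>UNIV. \<Sum>b\<in>UNIV. R2$i$a * X$a$b * R1$k$b)" by (rule sum.swap)
  also have "\<dots> = bil (R2 $ i) X (R1 $ k)" by (simp add: bil_def)
  finally show ?thesis .
qed

lemma QUAD: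
  fixes A B C l0 l1 l2 :: complex
  assumes "A*l1^2 + B*l1 + C = 0" "A*l2^2 + B*l2 + C = 0" "l1 \<noteq> l2" "A*l0^2 + B*l0 + C \<noteq> 0"
  shows "A \<noteq> 0 \<and> B^2 - 4*A*C \<noteq> 0"
proof -
  have "(l1 - l2) * (A*(l1+l2) + B) = 0"
    using assms(1,2) by (simp add: algebra_simps power2_eq_square) (metis diff_self add_diff_cancel_left')
  then have e: "A*(l1+l2) + B = 0" using assms(3) by simp
  then have B: "B = - A*(l1+l2)" by (simp add: algebra_simps add_eq_0_iff2)
  have C: "C = A*l1*l2" using assms(1) B by algebra
  have A0: "A \<noteq> 0"
  proof
    assume "A = 0"
    then show False using assms(4) B C by simp
  qed
  have "B^2 - 4*A*C = A^2 * (l1 - l2)^2" using B C by algebra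
  then show ?thesis using A0 assms(3) by simp
qed


lemma others:
  assumes "j \<in> {1,2,3::nat}"
  shows "\<exists>k l. k \<in> {1,2,3} \<and> l \<in> {1,2,3} \<and> k \<noteq> j \<and> l \<noteq> j \<and> k \<noteq> l"
proof -
  have "j = 1 \<or> j = 2 \<or> j = 3" using assms by auto
  then show ?thesis
  proof (elim disjE)
    assume "j = 1" then show ?thesis by (intro exI[of _ "2::nat"] exI[of _ "3::nat"]) simp
  next
    assume "j = 2" then show ?thesis by (intro exI[of _ "1::nat"] exI[of _ "3::nat"]) simp
  next
    assume "j = 3" then show ?thesis by (intro exI[of _ "1::nat"] exI[of _ "2::nat"]) simp
  qed
qed

lemma root_of:
  assumes G: "generic_line_with L0 L1 F" and j: "j \<in> {1,2,3}" and M: "on_line L0 L1 M"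
    and np: "\<not> mproportional M (F j)" and k: "k \<in> {1,2,3}" "k \<noteq> j"
  shows "\<exists>\<alpha> l. \<alpha> \<noteq> 0 \<and> F k = msc \<alpha> (M + msc l (F j))"
proof -
  note gf = gen_facts[OF G]
  obtain \<alpha> \<beta> where ab: "F k = msc \<alpha> M + msc \<beta> (F j)"
    using span2[OF gf(1) M gf(2)[OF j] np gf(6)[OF k(1)]] by blast
  have a0: "\<alpha> \<noteq> 0"
  proof
    assume "\<alpha> = 0"
    then have Fk: "F k = msc \<beta> (F j)" using ab by (simp add: vec_eq_iff)
    then have "\<beta> \<noteq> 0" using gf(5)[OF k(1)] by (auto simp: msc_zero_iff)
    then show False using gf(7)[OF k(1) j k(2)] Fk unfolding mproportional_def by blast
  qed
  have "F k = msc \<alpha> (M + msc (\<beta>/\<alpha>) (F j))"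
    using ab a0 by (simp add: vec_eq_iff algebra_simps)
  then show ?thesis using a0 by blast
qed

lemma PQ:
  assumes G: "generic_line_with L0 L1 F" and j: "j \<in> {1,2,3}" and M: "on_line L0 L1 M"
    and np: "\<not> mproportional M (F j)"
  shows "\<exists>l1 l2 l0. l1 \<noteq> l2 \<and> det (M + msc l1 (F j)) = 0 \<and> det (M + msc l2 (F j)) = 0
           \<and> det (M + msc l0 (F j)) \<noteq> 0"
proof -
  note gf = gen_facts[OF G]
  obtain k l where kl: "k \<in> {1,2,3}" "l \<in> {1,2,3}" "k \<noteq> j" "l \<noteq> j" "k \<noteq> l"
    using others[OF j] by blast
  obtain \<alpha>k l1 where k1: "\<alpha>k \<noteq> 0" "F k = msc \<alpha>k (M + msc l1 (F j))"
    using root_of[OF G j M np kl(1,3)] by blast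
  obtain \<alpha>l l2 where l2: "\<alpha>l \<noteq> 0" "F l = msc \<alpha>l (M + msc l2 (F j))"
    using root_of[OF G j M np kl(2,4)] by blast
  have d1: "det (M + msc l1 (F j)) = 0" using gf(4)[OF kl(1)] k1 by (simp add: det_msc)
  have d2: "det (M + msc l2 (F j)) = 0" using gf(4)[OF kl(2)] l2 by (simp add: det_msc)
  have ne: "l1 \<noteq> l2"
  proof
    assume "l1 = l2"
    then have "F k = msc (\<alpha>k / \<alpha>l) (F l)" using k1 l2 by (simp add: msc_msc)
    moreover have "\<alpha>k / \<alpha>l \<noteq> 0" using k1 l2 by simp
    ultimately show False using gf(7)[OF kl(1,2,5)] unfolding mproportional_def by blast
  qed
  obtain Z where Z: "inl L0 L1 Z" "det Z \<noteq> 0" using G0Z[OF G] by blast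
  obtain \<alpha> \<beta> where ab: "Z = msc \<alpha> M + msc \<beta> (F j)"
    using span2[OF gf(1) M gf(2)[OF j] np Z(1)] by blast
  have a0: "\<alpha> \<noteq> 0"
  proof
    assume "\<alpha> = 0"
    then have "Z = msc \<beta> (F j)" using ab by (simp add: vec_eq_iff)
    then show False using Z(2) gf(4)[OF j] by (simp add: det_msc)
  qed
  have "Z = msc \<alpha> (M + msc (\<beta>/\<alpha>) (F j))" using ab a0 by (simp add: vec_eq_iff algebra_simps)
  then have "det (M + msc (\<beta>/\<alpha>) (F j)) \<noteq> 0" using Z(2) by (simp add: det_msc)
  then show ?thesis using ne d1 d2 by blast
qed

lemma SK:
  assumes fund0: "\<forall>p. bil (A2 *v p) F (A1 *v p) = 0"
  shows "bil (A2 *v u) F (A1 *v v) + bil (A2 *v v) F (A1 *v u) = 0"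
  using fund0[rule_format, of "u+v"] fund0[rule_format, of u] fund0[rule_format, of v]
  by (simp add: matrix_vector_right_distrib bil_add_l bil_add_r add.commute)

lemma vec3_mv1: "((vector [a, b, c] :: complex^3^3) *v w) $ 1 = dt a w"
  by (simp add: matrix_vector_mult_def dt_def)
lemma vec3_mv2: "((vector [a, b, c] :: complex^3^3) *v w) $ 2 = dt b w"
  by (simp add: matrix_vector_mult_def dt_def)
lemma vec3_mv3: "((vector [a, b, c] :: complex^3^3) *v w) $ 3 = dt c w"
  by (simp add: matrix_vector_mult_def dt_def)

lemma detR_nz:
  fixes A :: "complex^4^3"
  assumes r: "rank A = 3" and c: "A *v c = 0"
    and rep: "\<forall>p. \<exists>a b s t. p = a *s c + b *s d + s *s u3 + t *s u4"
  shows "det (vector [A *v d, A *v u3, A *v u4] :: complex^3^3) \<noteq> 0"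
proof
  assume "det (vector [A *v d, A *v u3, A *v u4] :: complex^3^3) = 0"
  then obtain w where w: "w \<noteq> 0" "(vector [A *v d, A *v u3, A *v u4] :: complex^3^3) *v w = 0"
    using ker_of_det0 by blast
  have o: "dt (A *v d) w = 0" "dt (A *v u3) w = 0" "dt (A *v u4) w = 0"
    using w(2) vec3_mv1 vec3_mv2 vec3_mv3 by (metis zero_index)+
  have "dt w (A *v p) = 0" for p
  proof -
    obtain a b s t where "p = a *s c + b *s d + s *s u3 + t *s u4" using rep by blast
    then show ?thesis using o c
      by (simp add: matrix_vector_right_distrib vector_scalar_commute dt_lin dt_comm)
  qed
  then have "w v* A = 0" by (intro zero_by_dt) (simp add: dt_mv)
  then show False using rank3_S[OF r] w(1) by blast
qed


lemma idD:
  fixes m11 m12 m13 m21 m22 m23 m31 m32 m33 :: complex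
  shows "(2*(m11*m22 - m12*m21)) * (2*(m11*m33 - m13*m31)) - (m11*(m23+m32) - m12*m31 - m13*m21)^2
   = 4*m11*(m11*m22*m33 + m12*m23*m31 + m13*m21*m32 - m11*m23*m32 - m12*m21*m33 - m13*m22*m31)
     - (m11*(m23 - m32) + m12*m31 - m13*m21)^2"
  by (simp add: algebra_simps power2_eq_square)

lemma idpsi:
  fixes m11 m12 m13 m21 m22 m23 m31 m32 m33 l f :: complex
  shows "m11*(m22)*(m33) + m12*(m23 + l*f)*m31 + m13*m21*(m32 - l*f) - m11*(m23 + l*f)*(m32 - l*f) - m12*m21*m33 - m13*m22*m31
   = (m11*f^2)*l^2 + (f*(m11*(m23 - m32) + m12*m31 - m13*m21))*l + (m11*m22*m33 + m12*m23*m31 + m13*m21*m32 - m11*m23*m32 - m12*m21*m33 - m13*m22*m31)"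
  by (simp add: algebra_simps power2_eq_square)

lemma sing_alg:
  fixes m11 m12 m13 m21 m22 m23 m31 m32 m33 a b \<sigma> \<tau> :: complex
  assumes E1: "b*m11 + \<sigma>*m12 + \<tau>*m13 = 0"
    and E2: "a*m11 + \<sigma>*m21 + \<tau>*m31 = 0"
    and E3: "b*m21 + \<sigma>*m22 + \<tau>*m23 + (a*m12 + \<sigma>*m22 + \<tau>*m32) = 0"
    and E4: "b*m31 + \<sigma>*m32 + \<tau>*m33 + (a*m13 + \<sigma>*m23 + \<tau>*m33) = 0"
    and m0: "m11 \<noteq> 0"
    and D0: "4*m11*(m11*m22*m33 + m12*m23*m31 + m13*m21*m32 - m11*m23*m32 - m12*m21*m33 - m13*m22*m31)
     - (m11*(m23 - m32) + m12*m31 - m13*m21)^2 \<noteq> 0"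
  shows "a = 0 \<and> b = 0 \<and> \<sigma> = 0 \<and> \<tau> = 0"
proof -
  define P where "P = 2*(m11*m22 - m12*m21)"
  define Q where "Q = m11*(m23+m32) - m12*m31 - m13*m21"
  define R where "R = 2*(m11*m33 - m13*m31)"
  have G3: "P*\<sigma> + Q*\<tau> = 0"
  proof -
    have "P*\<sigma> + Q*\<tau> = m11*(b*m21 + \<sigma>*m22 + \<tau>*m23 + (a*m12 + \<sigma>*m22 + \<tau>*m32))
        - m21*(b*m11 + \<sigma>*m12 + \<tau>*m13) - m12*(a*m11 + \<sigma>*m21 + \<tau>*m31)"
      by (simp add: P_def Q_def algebra_simps)
    then show ?thesis using E1 E2 E3 by simp
  qed
  have G4: "Q*\<sigma> + R*\<tau> = 0"
  proof -
    have "Q*\<sigma> + R*\<tau> = m11*(b*m31 + \<sigma>*m32 + \<tau>*m33 + (a*m13 + \<sigma>*m23 + \<tau>*m33))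
        - m31*(b*m11 + \<sigma>*m12 + \<tau>*m13) - m13*(a*m11 + \<sigma>*m21 + \<tau>*m31)"
      by (simp add: R_def Q_def algebra_simps)
    then show ?thesis using E1 E2 E4 by simp
  qed
  have DD: "P*R - Q^2 \<noteq> 0" using D0 idD[of m11 m22 m12 m21 m33 m13 m31 m23 m32]
    by (simp add: P_def Q_def R_def)
  have "(P*R - Q^2)*\<sigma> = R*(P*\<sigma> + Q*\<tau>) - Q*(Q*\<sigma> + R*\<tau>)" by (simp add: algebra_simps power2_eq_square)
  then have s0: "\<sigma> = 0" using G3 G4 DD by simp
  have "(P*R - Q^2)*\<tau> = P*(Q*\<sigma> + R*\<tau>) - Q*(P*\<sigma> + Q*\<tau>)" by (simp add: algebra_simps power2_eq_square)
  then have t0: "\<tau> = 0" using G3 G4 DD by simp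
  have "b = 0" using E1 s0 t0 m0 by simp
  moreover have "a = 0" using E2 s0 t0 m0 by simp
  ultimately show ?thesis using s0 t0 by simp
qed

lemma CAM:
  fixes A1 A2 :: "complex^4^3" and Fj M :: "complex^3^3" and c1 c2 :: "complex^4"
  assumes r1: "rank A1 = 3" and r2: "rank A2 = 3"
    and c1: "c1 \<noteq> 0" "A1 *v c1 = 0" and c2: "c2 \<noteq> 0" "A2 *v c2 = 0"
    and npc: "\<not> proportional c1 c2"
    and fund0: "\<forall>p. bil (A2 *v p) Fj (A1 *v p) = 0"
    and roots: "l1 \<noteq> l2" "det (M + msc l1 Fj) = 0" "det (M + msc l2 Fj) = 0"
      "det (M + msc l0 Fj) \<noteq> 0"
  shows "permissible_quadric (quad_of A1 A2 M) c1 c2"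
proof -
  have nd: "\<not> (\<exists>\<mu>. c2 = \<mu> *s c1)"
  proof
    assume "\<exists>\<mu>. c2 = \<mu> *s c1"
    then obtain \<mu> where mu: "c2 = \<mu> *s c1" by blast
    then have "\<mu> \<noteq> 0" using c2(1) by auto
    then have "c1 = (1/\<mu>) *s c2" using mu by (simp add: vec_eq_iff)
    then show False using npc \<open>\<mu> \<noteq> 0\<close> c2(1) unfolding proportional_def by auto
  qed
  obtain u3 u4 where rep: "\<forall>p. \<exists>a b \<sigma> \<tau>. p = a *s c1 + b *s c2 + \<sigma> *s u3 + \<tau> *s u4"
    using basis4[OF c1(1) nd] by blast
  have rep2: "\<forall>p. \<exists>a b \<sigma> \<tau>. p = a *s c2 + b *s c1 + \<sigma> *s u3 + \<tau> *s u4"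
  proof
    fix p
    obtain a b \<sigma> \<tau> where "p = a *s c1 + b *s c2 + \<sigma> *s u3 + \<tau> *s u4" using rep by blast
    then have "p = b *s c2 + a *s c1 + \<sigma> *s u3 + \<tau> *s u4" by (simp add: algebra_simps)
    then show "\<exists>a b \<sigma> \<tau>. p = a *s c2 + b *s c1 + \<sigma> *s u3 + \<tau> *s u4" by blast
  qed
  define e1 where "e1 = A1 *v c2"
  define x3 where "x3 = A1 *v u3"
  define x4 where "x4 = A1 *v u4"
  define e2 where "e2 = A2 *v c1"
  define y3 where "y3 = A2 *v u3"
  define y4 where "y4 = A2 *v u4"
  define R1 :: "complex^3^3" where "R1 = vector [e1, x3, x4]"
  define R2 :: "complex^3^3" where "R2 = vector [e2, y3, y4]"
  have dR1: "det R1 \<noteq> 0" unfolding R1_def e1_def x3_def x4_def by (rule detR_nz[OF r1 c1(2) rep])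
  have dR2: "det R2 \<noteq> 0" unfolding R2_def e2_def y3_def y4_def by (rule detR_nz[OF r2 c2(2) rep2])
  note sk = SK[OF fund0]
  have f11: "bil e2 Fj e1 = 0" using sk[of c1 c2] c1(2) c2(2) by (simp add: e1_def e2_def)
  have f12: "bil e2 Fj x3 = 0" using sk[of c1 u3] c1(2) by (simp add: x3_def e2_def)
  have f13: "bil e2 Fj x4 = 0" using sk[of c1 u4] c1(2) by (simp add: x4_def e2_def)
  have f21: "bil y3 Fj e1 = 0" using sk[of u3 c2] c2(2) by (simp add: y3_def e1_def)
  have f31: "bil y4 Fj e1 = 0" using sk[of u4 c2] c2(2) by (simp add: y4_def e1_def)
  have f22: "bil y3 Fj x3 = 0" using fund0 by (simp add: y3_def x3_def)
  have f33: "bil y4 Fj x4 = 0" using fund0 by (simp add: y4_def x4_def)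
  define f where "f = bil y3 Fj x4"
  have f32: "bil y4 Fj x3 = - f" using sk[of u3 u4] by (simp add: f_def y3_def y4_def x3_def x4_def eq_neg_iff_add_eq_0 add.commute)
  define m11 where "m11 = bil e2 M e1"
  define m12 where "m12 = bil e2 M x3"
  define m13 where "m13 = bil e2 M x4"
  define m21 where "m21 = bil y3 M e1"
  define m22 where "m22 = bil y3 M x3"
  define m23 where "m23 = bil y3 M x4"
  define m31 where "m31 = bil y4 M e1"
  define m32 where "m32 = bil y4 M x3"
  define m33 where "m33 = bil y4 M x4"
  define Xc where "Xc = m11*(m23 - m32) + m12*m31 - m13*m21"
  define Cc where "Cc = m11*m22*m33 + m12*m23*m31 + m13*m21*m32 - m11*m23*m32 - m12*m21*m33 - m13*m22*m31"
  have ent: "((R2 ** (M + msc l Fj)) ** transpose R1) $ i $ k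
      = bil (R2 $ i) M (R1 $ k) + l * bil (R2 $ i) Fj (R1 $ k)" for l i k
    by (simp add: entry_lemma bil_madd bil_msc)
  have dT: "det ((R2 ** (M + msc l Fj)) ** transpose R1) = det R2 * det (M + msc l Fj) * det R1" for l
    by (simp add: det_mul det_transpose)
  have eT: "det ((R2 ** (M + msc l Fj)) ** transpose R1) = (m11*f^2)*l^2 + (f*Xc)*l + Cc" for l
  proof -
    have "det ((R2 ** (M + msc l Fj)) ** transpose R1) =
      m11*(m22)*(m33) + m12*(m23 + l*f)*m31 + m13*m21*(m32 - l*f) - m11*(m23 + l*f)*(m32 - l*f) - m12*m21*m33 - m13*m22*m31"
      unfolding det_3 ent
      by (simp add: R1_def R2_def f11 f12 f13 f21 f31 f22 f33 f32 f_def[symmetric]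
          m11_def[symmetric] m12_def[symmetric] m13_def[symmetric] m21_def[symmetric] m22_def[symmetric]
          m23_def[symmetric] m31_def[symmetric] m32_def[symmetric] m33_def[symmetric] algebra_simps)
    also have "\<dots> = (m11*f^2)*l^2 + (f*Xc)*l + Cc" unfolding Xc_def Cc_def by (rule idpsi)
    finally show ?thesis .
  qed
  have q1: "(m11*f^2)*l1^2 + (f*Xc)*l1 + Cc = 0" using eT[of l1] dT[of l1] roots(2) by simp
  have q2: "(m11*f^2)*l2^2 + (f*Xc)*l2 + Cc = 0" using eT[of l2] dT[of l2] roots(3) by simp
  have q0: "(m11*f^2)*l0^2 + (f*Xc)*l0 + Cc \<noteq> 0" using eT[of l0] dT[of l0] roots(4) dR1 dR2 by (metis mult_eq_0_iff)
  from QUAD[OF q1 q2 roots(1) q0]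
  have Q: "m11*f^2 \<noteq> 0" "(f*Xc)^2 - 4*(m11*f^2)*Cc \<noteq> 0" by auto
  have m0: "m11 \<noteq> 0" and f0: "f \<noteq> 0" using Q(1) by auto
  have "(f*Xc)^2 - 4*(m11*f^2)*Cc = - (f^2 * (4*m11*Cc - Xc^2))" by (simp add: algebra_simps power2_eq_square)
  then have D0: "4*m11*Cc - Xc^2 \<noteq> 0" using Q(2) by auto
  let ?N = "quad_of A1 A2 M"
  have qfc: "qf ?N (a *s c1 + b *s c2) = a * b * m11" for a b
    by (simp add: qf_quad matrix_vector_right_distrib vector_scalar_commute c1(2) c2(2)
        bil_scale_l bil_scale_r m11_def e1_def e2_def)
  have smooth2: "(?N + transpose ?N) *v p \<noteq> 0" if p: "p \<noteq> 0" for p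
  proof
    assume g: "(?N + transpose ?N) *v p = 0"
    have gv: "bil (A2 *v v) M (A1 *v p) + bil (A2 *v p) M (A1 *v v) = 0" for v
      using grad_dt[of v ?N p] g by (simp add: quad_of_def bil_quad)
    obtain a b \<sigma> \<tau> where pr: "p = a *s c1 + b *s c2 + \<sigma> *s u3 + \<tau> *s u4" using rep by blast
    have xp: "A1 *v p = b *s e1 + \<sigma> *s x3 + \<tau> *s x4"
      using c1(2) by (simp add: pr matrix_vector_right_distrib vector_scalar_commute e1_def x3_def x4_def)
    have yp: "A2 *v p = a *s e2 + \<sigma> *s y3 + \<tau> *s y4"
      using c2(2) by (simp add: pr matrix_vector_right_distrib vector_scalar_commute e2_def y3_def y4_def)
    have E1: "b*m11 + \<sigma>*m12 + \<tau>*m13 = 0"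
      using gv[of c1] c1(2) unfolding xp yp
      by (simp add: bil_add_l bil_add_r bil_scale_l bil_scale_r m11_def m12_def m13_def e2_def[symmetric] mult.commute)
    have E2: "a*m11 + \<sigma>*m21 + \<tau>*m31 = 0"
      using gv[of c2] c2(2) unfolding xp yp
      by (simp add: bil_add_l bil_add_r bil_scale_l bil_scale_r m11_def m21_def m31_def e1_def[symmetric] mult.commute)
    have E3: "b*m21 + \<sigma>*m22 + \<tau>*m23 + (a*m12 + \<sigma>*m22 + \<tau>*m32) = 0"
      using gv[of u3] unfolding xp yp
      by (simp add: bil_add_l bil_add_r bil_scale_l bil_scale_r m21_def m22_def m23_def m12_def m32_def
          x3_def[symmetric] y3_def[symmetric] mult.commute)
    have E4: "b*m31 + \<sigma>*m32 + \<tau>*m33 + (a*m13 + \<sigma>*m23 + \<tau>*m33) = 0"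
      using gv[of u4] unfolding xp yp
      by (simp add: bil_add_l bil_add_r bil_scale_l bil_scale_r m31_def m32_def m33_def m13_def m23_def
          x4_def[symmetric] y4_def[symmetric] mult.commute)
    have "a = 0 \<and> b = 0 \<and> \<sigma> = 0 \<and> \<tau> = 0"
      by (rule sing_alg[OF E1 E2 E3 E4 m0]) (use D0 in \<open>simp add: Cc_def Xc_def\<close>)
    then have "p = 0" using pr by simp
    then show False using p by simp
  qed
  show ?thesis
    unfolding permissible_quadric_def smooth_quadric_def
  proof (intro conjI)
    show "\<exists>p. qf ?N p \<noteq> 0" using qfc[of 1 1] m0 by (intro exI[of _ "1 *s c1 + 1 *s c2"]) simp
    show "\<forall>p. p \<noteq> 0 \<and> qf ?N p = 0 \<longrightarrow> (?N + transpose ?N) *v p \<noteq> 0" using smooth2 by blast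
    show "qf ?N c1 = 0" using qfc[of 1 0] by simp
    show "qf ?N c2 = 0" using qfc[of 0 1] by simp
    show "\<not> (\<forall>a b. qf ?N (a *s c1 + b *s c2) = 0)"
    proof
      assume "\<forall>a b. qf ?N (a *s c1 + b *s c2) = 0"
      then have "qf ?N (1 *s c1 + 1 *s c2) = 0" by blast
      then show False using qfc[of 1 1] m0 by simp
    qed
  qed
qed

lemma EPC:
  assumes G: "generic_line_with L0 L1 F" and j: "j \<in> {1,2,3}" and M: "on_line L0 L1 M"
    and np: "\<not> mproportional M (F j)"
    and fund0: "\<forall>p. bil (A2 *v p) (F j) (A1 *v p) = 0"
  shows "equals_proj_composite (fcr L0 L1) A1 A2 (quad_of A1 A2 M)"
  unfolding equals_proj_composite_def
proof (intro allI impI)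
  note gf = gen_facts[OF G]
  fix p
  assume h: "p \<noteq> 0 \<and> qf (quad_of A1 A2 M) p = 0 \<and> A1 *v p \<noteq> 0 \<and> A2 *v p \<noteq> 0
     \<and> fcr L0 L1 (A1 *v p) \<noteq> 0"
  define x where "x = A1 *v p"
  define y where "y = A2 *v p"
  have bM: "bil y M x = 0" using h by (simp add: qf_quad x_def y_def)
  have bF: "bil y (F j) x = 0" using fund0 by (simp add: x_def y_def)
  have iL0: "inl L0 L1 L0" unfolding inl_def
    by (intro exI[of _ 1] exI[of _ 0]) (simp add: vec_eq_iff)
  have iL1: "inl L0 L1 L1" unfolding inl_def
    by (intro exI[of _ 0] exI[of _ 1]) (simp add: vec_eq_iff)
  obtain a0 b0 where L0e: "L0 = msc a0 M + msc b0 (F j)"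
    using span2[OF gf(1) M gf(2)[OF j] np iL0] by blast
  obtain a1 b1 where L1e: "L1 = msc a1 M + msc b1 (F j)"
    using span2[OF gf(1) M gf(2)[OF j] np iL1] by blast
  have o0: "dt (L0 *v x) y = 0"
  proof -
    have "bil y L0 x = 0" using bM bF by (subst L0e) (simp add: bil_madd bil_msc)
    then show ?thesis by (simp add: bil_dt dt_comm)
  qed
  have o1: "dt (L1 *v x) y = 0"
  proof -
    have "bil y L1 x = 0" using bM bF by (subst L1e) (simp add: bil_madd bil_msc)
    then show ?thesis by (simp add: bil_dt dt_comm)
  qed
  have cz: "cr (L0 *v x) (L1 *v x) \<noteq> 0" using h by (simp add: fcr_def x_def)
  obtain \<mu> where mu: "y = \<mu> *s cr (L0 *v x) (L1 *v x)" using perp2[OF o0 o1 cz] by blast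
  have "\<mu> \<noteq> 0" using h mu by (auto simp: y_def)
  then have "fcr L0 L1 x = (1/\<mu>) *s y" using mu by (simp add: fcr_def vec_eq_iff)
  then show "proportional (fcr L0 L1 (A1 *v p)) (A2 *v p)"
    using \<open>\<mu> \<noteq> 0\<close> unfolding proportional_def x_def y_def
    by (intro exI[of _ "1/\<mu>"]) simp
qed

theorem mainTheorem14:
  fixes L0 L1 :: "complex^3^3"
    and F :: "nat \<Rightarrow> complex^3^3"
    and ex ey :: "nat \<Rightarrow> complex^3"
    and P1 P2 :: "nat \<Rightarrow> complex^4^3"
    and c1 c2 :: "nat \<Rightarrow> complex^4"
  assumes generic: "generic_line_with L0 L1 F"
    and nullx: "\<forall>j\<in>{1,2,3}. ex j \<noteq> 0 \<and> F j *v ex j = 0"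
    and nully: "\<forall>j\<in>{1,2,3}. ey j \<noteq> 0 \<and> ey j v* F j = 0"
    and proj: "\<forall>j\<in>{1,2,3}. is_projection (P1 j) \<and> is_projection (P2 j)"
    and centers: "\<forall>j\<in>{1,2,3}. is_center (P1 j) (c1 j) \<and> is_center (P2 j) (c2 j)
                     \<and> \<not> proportional (c1 j) (c2 j)"
    and fund: "\<forall>j\<in>{1,2,3}. is_fundamental_matrix (P1 j) (P2 j) (F j)"
  shows "(\<forall>j\<in>{1,2,3}. \<forall>M. on_line L0 L1 M \<and> \<not> mproportional M (F j) \<longrightarrow>
            permissible_quadric (quad_of (P1 j) (P2 j) M) (c1 j) (c2 j))
       \<and> (\<exists>f g. quadratic_cremona f g
            \<and> base_points f = {x. \<exists>j\<in>{1,2,3}. proportional x (ex j)}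
            \<and> base_points g = {y. \<exists>j\<in>{1,2,3}. proportional y (ey j)}
            \<and> (\<forall>j\<in>{1,2,3}. \<forall>M. on_line L0 L1 M \<and> \<not> mproportional M (F j) \<longrightarrow>
                  equals_proj_composite f (P1 j) (P2 j) (quad_of (P1 j) (P2 j) M)))"
proof -
  note G = generic
  note gf = gen_facts[OF G]
  have part1: "\<forall>j\<in>{1,2,3}. \<forall>M. on_line L0 L1 M \<and> \<not> mproportional M (F j) \<longrightarrow>
            permissible_quadric (quad_of (P1 j) (P2 j) M) (c1 j) (c2 j)"
  proof (intro ballI allI impI)
    fix j M assume j: "j \<in> {1,2,3}" and M: "on_line L0 L1 M \<and> \<not> mproportional M (F j)"
    obtain l1 l2 l0 where ls: "l1 \<noteq> l2" "det (M + msc l1 (F j)) = 0" "det (M + msc l2 (F j)) = 0"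
        "det (M + msc l0 (F j)) \<noteq> 0"
      using PQ[OF G j] M by blast
    have r: "rank (P1 j) = 3" "rank (P2 j) = 3" using bspec[OF proj j] by (auto simp: is_projection_def)
    have c: "c1 j \<noteq> 0" "P1 j *v c1 j = 0" "c2 j \<noteq> 0" "P2 j *v c2 j = 0" "\<not> proportional (c1 j) (c2 j)"
      using bspec[OF centers j] by (auto simp: is_center_def)
    have fu: "\<forall>p. bil (P2 j *v p) (F j) (P1 j *v p) = 0"
      using bspec[OF fund j] by (simp add: is_fundamental_matrix_def)
    show "permissible_quadric (quad_of (P1 j) (P2 j) M) (c1 j) (c2 j)"
      by (rule CAM[OF r c fu ls])
  qed
  define f where "f = fcr L0 L1"
  define g where "g = fcr (transpose L0) (transpose L1)"
  note GT' = GT[OF G]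
  have nxT: "\<forall>j\<in>{1,2,3}. ey j \<noteq> 0 \<and> transpose (F j) *v ey j = 0" using nully by simp
  have nyT: "\<forall>j\<in>{1,2,3}. ex j \<noteq> 0 \<and> ex j v* transpose (F j) = 0" using nullx by (simp add: vm_transpose)
  have bpf: "base_points f = {x. \<exists>j\<in>{1,2,3}. proportional x (ex j)}"
    unfolding f_def by (rule BP[OF G nullx])
  have bpg: "base_points g = {y. \<exists>j\<in>{1,2,3}. proportional y (ey j)}"
    unfolding g_def by (rule BP[OF GT' nxT])
  have qc: "quadratic_cremona f g"
    unfolding quadratic_cremona_def
  proof (intro conjI)
    show "quadratic_map f" unfolding f_def by (rule quadratic_fcr)
    show "quadratic_map g" unfolding g_def by (rule quadratic_fcr)
    show "\<forall>x. \<exists>c. g (f x) = c *s x" unfolding f_def g_def using GF by blast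
    show "\<exists>x. g (f x) \<noteq> 0" unfolding f_def g_def by (rule NZ[OF G nullx nully])
    show "\<forall>y. \<exists>c. f (g y) = c *s y" unfolding f_def g_def
      using GF[of "transpose L0" "transpose L1"] by simp
    show "\<exists>y. f (g y) \<noteq> 0" unfolding f_def g_def
      using NZ[OF GT' nxT nyT] by simp
    show "three_distinct_points (base_points f)" unfolding bpf by (rule TD[OF G nullx])
    show "three_distinct_points (base_points g)" unfolding bpg by (rule TD[OF GT' nxT])
  qed
  have epc: "\<forall>j\<in>{1,2,3}. \<forall>M. on_line L0 L1 M \<and> \<not> mproportional M (F j) \<longrightarrow>
                  equals_proj_composite f (P1 j) (P2 j) (quad_of (P1 j) (P2 j) M)"
  proof (intro ballI allI impI)
    fix j M assume j: "j \<in> {1,2,3}" and M: "on_line L0 L1 M \<and> \<not> mproportional M (F j)"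
    have fu: "\<forall>p. bil (P2 j *v p) (F j) (P1 j *v p) = 0"
      using bspec[OF fund j] by (simp add: is_fundamental_matrix_def)
    show "equals_proj_composite f (P1 j) (P2 j) (quad_of (P1 j) (P2 j) M)"
      unfolding f_def using EPC[OF G j _ _ fu] M by blast
  qed
  show ?thesis using part1 qc bpf bpg epc by blast
qed

end
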